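(* Let $G=A_n$ be the alternating group with $n\ge 5$, and let $p$ be an odd prime dividing $|G|$. Then $d_{p'}(G)\le 1/(p-1)$. Furthermore, equality holds if and only if $p=5$ and $n=5$ (i.e. $G=A_5\cong\mathrm{PSL}_2(5)$).
   Context: For a finite group $G$ and prime $p$, $k_{p'}(G)$ denotes the number of conjugacy classes of elements of $G$ whose order is not divisible by $p$, $|G|_{p'}$ is the largest divisor of $|G|$ coprime to $p$, and $d_{p'}(G)=k_{p'}(G)/|G|_{p'}$. *)

theory Defs
  imports "HOL-Algebra.Algebra" "HOL-Computational_Algebra.Primes"
begin

definition conj_class :: "('a, 'b) monoid_scheme \<Rightarrow> 'a \<Rightarrow> 'a set" where
  "conj_class G x = {g \<otimes>\<^bsub>G\<^esub> x \<otimes>\<^bsub>G\<^esub> inv\<^bsub>G\<^esub> g | g. g \<in> carrier G}"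

definition p_regular :: "('a, 'b) monoid_scheme \<Rightarrow> nat \<Rightarrow> 'a \<Rightarrow> bool" where
  "p_regular G p x \<longleftrightarrow> x \<in> carrier G \<and> \<not> p dvd group.ord G x"

definition k_p' :: "('a, 'b) monoid_scheme \<Rightarrow> nat \<Rightarrow> nat" where
  "k_p' G p = card {conj_class G x | x. p_regular G p x}"

definition order_p' :: "('a, 'b) monoid_scheme \<Rightarrow> nat \<Rightarrow> nat" where
  "order_p' G p = Max {d. d dvd order G \<and> coprime d p}"

definition d_p' :: "('a, 'b) monoid_scheme \<Rightarrow> nat \<Rightarrow> real" where
  "d_p' G p = real (k_p' G p) / real (order_p' G p)"

end

theory Submission
  imports Defs "HOL-Combinatorics.Cycles"
begin


definition cprod :: "'a list list \<Rightarrow> 'a \<Rightarrow> 'a" where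
  "cprod css = foldr (\<lambda>cs f. cycle_of_list cs \<circ> f) css id"

lemma cprod_Nil[simp]: "cprod [] = id" by (simp add: cprod_def)
lemma cprod_Cons[simp]: "cprod (cs # css) = cycle_of_list cs \<circ> cprod css"
  by (simp add: cprod_def)

lemma cycle_in: "x \<in> set cs \<Longrightarrow> cycle_of_list cs x \<in> set cs"
  by (metis cycle_permutes permutes_in_image)

lemma cprod_outside: "x \<notin> set (concat css) \<Longrightarrow> cprod css x = x"
  by (induction css) (auto simp: id_outside_supp)

lemma cprod_inside:
  assumes "distinct (concat css)" "cs \<in> set css" "x \<in> set cs"
  shows "cprod css x = cycle_of_list cs x"
  using assms
proof (induction css)
  case Nil then show ?case by simp
next
  case (Cons c css)
  show ?case
  proof (cases "cs = c")
    case True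
    then have "x \<notin> set (concat css)" using Cons.prems by auto
    then show ?thesis using True by (simp add: cprod_outside)
  next
    case False
    then have "cs \<in> set css" using Cons.prems by auto
    then have "cprod css x = cycle_of_list cs x" using Cons by auto
    moreover have "cycle_of_list cs x \<notin> set c"
      using cycle_in[OF Cons.prems(3)] \<open>cs \<in> set css\<close> Cons.prems(1) by auto
    ultimately show ?thesis by (simp add: id_outside_supp)
  qed
qed

lemma cprod_eq:
  assumes "distinct (concat css)" "distinct (concat css')" "set css = set css'"
  shows "cprod css = cprod css'"
proof
  fix x
  show "cprod css x = cprod css' x"
  proof (cases "x \<in> set (concat css)")
    case True
    then obtain cs where "cs \<in> set css" "x \<in> set cs" by auto
    then show ?thesis using cprod_inside assms by metis
  next
    case False
    then have "x \<notin> set (concat css')" using assms(3) by auto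
    then show ?thesis using False by (simp add: cprod_outside)
  qed
qed

lemma cprod_pow:
  assumes "distinct (concat css)" "cs \<in> set css" "x \<in> set cs"
  shows "(cprod css ^^ m) x = (cycle_of_list cs ^^ m) x"
proof (induction m)
  case 0 then show ?case by simp
next
  case (Suc m)
  have "(cycle_of_list cs ^^ m) x \<in> set cs"
    by (induction m) (auto simp: assms(3) cycle_in)
  then show ?case using Suc cprod_inside[OF assms(1,2)] by simp
qed

lemma cycle_pow_dvd:
  assumes "distinct cs" "cs \<noteq> []" "(cycle_of_list cs ^^ m) (hd cs) = hd cs"
  shows "length cs dvd m"
proof -
  have "map (cycle_of_list cs ^^ m) cs = rotate m cs" using cyclic_rotation[OF assms(1)] .
  then have "(cycle_of_list cs ^^ m) (cs ! 0) = rotate m cs ! 0"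
    using assms(2) by (metis length_greater_0_conv nth_map)
  also have "\<dots> = cs ! (m mod length cs)" using assms(2) by (simp add: nth_rotate)
  finally have "cs ! (m mod length cs) = cs ! 0" using assms(2,3) by (simp add: hd_conv_nth)
  then have "m mod length cs = 0"
    using assms(1,2) nth_eq_iff_index_eq by (metis length_greater_0_conv mod_less_divisor)
  then show ?thesis by auto
qed

lemma cprod_swapidseq:
  assumes "distinct (concat css)"
  shows "swapidseq_ext (set (concat css)) (\<Sum>cs\<leftarrow>css. length cs - 1) (cprod css)"
  using assms
proof (induction css)
  case Nil then show ?case using swapidseq_ext.empty by (simp add: id_def)
next
  case (Cons cs css)
  have "swapidseq_ext (set cs \<union> set (concat css)) ((length cs - 1) + (\<Sum>cs\<leftarrow>css. length cs - 1))
          (cycle_of_list cs \<circ> cprod css)"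
    by (rule swapidseq_ext_extension) (use Cons swapidseq_ext_of_cycles in auto)
  then show ?case by (simp del: comp_apply)
qed

lemma cprod_evenperm:
  assumes "distinct (concat css)"
  shows "evenperm (cprod css) \<longleftrightarrow> even (\<Sum>cs\<leftarrow>css. length cs - 1)"
  using evenperm_unique swapidseq_ext_imp_swapidseq cprod_swapidseq[OF assms] by blast

lemma cprod_permutation:
  assumes "distinct (concat css)" shows "permutation (cprod css)"
  using swapidseq_ext_imp_swapidseq cprod_swapidseq[OF assms] permutation_def by blast

lemma cprod_conj:
  assumes "bij g" "distinct (concat css)"
  shows "g \<circ> cprod css \<circ> inv_into UNIV g = cprod (map (map g) css)"
  using assms(2)
proof (induction css)
  case Nil then show ?case using assms(1) by (simp add: fun_eq_iff bij_inv_eq_iff bij_is_surj surj_f_inv_f)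
next
  case (Cons cs css)
  have ginv: "inv_into UNIV g \<circ> g = id" using assms(1) bij_is_inj inv_o_cancel by blast
  have "g \<circ> cprod (cs # css) \<circ> inv_into UNIV g = (g \<circ> cycle_of_list cs \<circ> inv_into UNIV g) \<circ> (g \<circ> cprod css \<circ> inv_into UNIV g)"
    using ginv by (simp add: fun_eq_iff)
  also have "\<dots> = cycle_of_list (map g cs) \<circ> cprod (map (map g) css)"
    using Cons conjugation_of_cycle[OF _ assms(1), of cs] by (auto simp del: comp_apply)
  finally show ?case by (simp del: comp_apply)
qed

lemma cycle_decomp_cprod:
  assumes "cycle_decomp S p"
  shows "\<exists>css. distinct (concat css) \<and> set (concat css) = S \<and> [] \<notin> set css \<and> p = cprod css"
  using assms
proof (induction)
  case empty
  then show ?case by (intro exI[of _ "[]"]) auto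
next
  case (comp I p cs)
  then obtain css where css: "distinct (concat css)" "set (concat css) = I" "[] \<notin> set css" "p = cprod css"
    by blast
  show ?case
  proof (cases "cs = []")
    case True
    then show ?thesis using css by (intro exI[of _ css]) auto
  next
    case False
    then show ?thesis using css comp by (intro exI[of _ "cs # css"]) auto
  qed
qed



fun blk :: "nat \<Rightarrow> nat list \<Rightarrow> nat list list" where
  "blk s [] = []"
| "blk s (k # ks) = [s..<s+k] # blk (s+k) ks"

definition canon :: "nat list \<Rightarrow> nat \<Rightarrow> nat" where
  "canon ks = cprod (blk 1 ks)"

lemma map_map_blk:
  assumes "\<And>i. i < length (concat css) \<Longrightarrow> g (concat css ! i) = s + i"
  shows "map (map g) css = blk s (map length css)"
  using assms
proof (induction css arbitrary: s)
  case Nil then show ?case by simp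
next
  case (Cons cs css)
  have "map g cs = [s..<s+length cs]"
  proof (rule nth_equalityI)
    fix i assume "i < length (map g cs)"
    then have "i < length (concat (cs # css))" by simp
    from Cons.prems[OF this] \<open>i < length (map g cs)\<close>
    show "map g cs ! i = [s..<s + length cs] ! i" by (simp add: nth_append)
  qed simp
  moreover have "map (map g) css = blk (s + length cs) (map length css)"
  proof (rule Cons.IH)
    fix i assume "i < length (concat css)"
    then have "length cs + i < length (concat (cs # css))" by simp
    from Cons.prems[OF this] show "g (concat css ! i) = s + length cs + i" by (simp add: nth_append)
  qed
  ultimately show ?case by simp
qed

lemma relabel_exists:
  fixes n :: nat
  assumes "distinct ws" "set ws = {1..n}"
  shows "\<exists>g. g permutes {1..n} \<and> (\<forall>i<length ws. g (ws ! i) = 1 + i)"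
proof -
  have len: "length ws = n" using distinct_card[OF assms(1)] assms(2) by simp
  have b1: "bij_betw ((!) ws) {..<n} {1..n}" using bij_betw_nth[OF assms(1)] assms len by simp
  then have b2: "bij_betw (inv_into {..<n} ((!) ws)) {1..n} {..<n}" by (rule bij_betw_inv_into)
  have b3: "bij_betw Suc {..<n} {1..n}"
    by (simp add: bij_betw_def inj_on_def image_Suc_lessThan atLeastAtMostSuc_conv)
  define g where "g x = (if x \<in> {1..n} then Suc (inv_into {..<n} ((!) ws) x) else x)" for x
  have "bij_betw (Suc \<circ> inv_into {..<n} ((!) ws)) {1..n} {1..n}"
    using bij_betw_trans[OF b2 b3] .
  then have "bij_betw g {1..n} {1..n}"
    by (rule bij_betw_cong[THEN iffD1, rotated]) (simp add: g_def)
  then have "g permutes {1..n}" by (rule bij_imp_permutes) (auto simp add: g_def)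
  moreover have "g (ws ! i) = 1 + i" if "i < length ws" for i
  proof -
    have "ws ! i \<in> {1..n}" using that assms(2) nth_mem by blast
    moreover have "inv_into {..<n} ((!) ws) (ws ! i) = i"
      using b1 that len by (simp add: bij_betw_def inv_into_f_f)
    ultimately show ?thesis by (simp add: g_def)
  qed
  ultimately show ?thesis by blast
qed

lemma decomp_sorted:
  fixes n :: nat
  assumes "\<sigma> permutes {1..n}"
  shows "\<exists>css. distinct (concat css) \<and> set (concat css) = {1..n} \<and> [] \<notin> set css
           \<and> \<sigma> = cprod css \<and> sorted_wrt (\<ge>) (map length css)"
proof -
  obtain css where css: "distinct (concat css)" "set (concat css) = {1..n}" "[] \<notin> set css" "\<sigma> = cprod css"
    using cycle_decomp_cprod[OF cycle_decomposition[OF assms]] by auto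
  define css' where "css' = rev (sort_key length css)"
  have set': "set css' = set css" by (simp add: css'_def)
  have d: "distinct css" using css(1,3) distinct_concat_iff[of css] by (simp add: removeAll_id)
  have "distinct (concat css')"
    using css(1,3) d unfolding distinct_concat_iff
    by (simp add: css'_def removeAll_id distinct_sort)
  moreover have "sorted_wrt (\<ge>) (map length css')"
    using sorted_sort_key[of length css] by (simp add: css'_def rev_map[symmetric] sorted_wrt_rev)
  moreover have "set (concat css') = {1..n}" using css(2) set' by simp
  moreover have "\<sigma> = cprod css'" using cprod_eq[OF css(1) calculation(1) set'[symmetric]] css(4) by simp
  ultimately show ?thesis using css(3) set' by metis
qed



function parts :: "nat \<Rightarrow> nat \<Rightarrow> nat list list" where
  "parts n m = (if n = 0 then [[]] else concat (map (\<lambda>k. map ((#) k) (parts (n - k) k)) [1..<Suc (min m n)]))"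
  by auto
termination by (relation "measure fst") auto

declare parts.simps[simp del]

lemma parts_mem:
  assumes "sorted_wrt (\<ge>) xs" "0 \<notin> set xs" "\<forall>x\<in>set xs. x \<le> m" "sum_list xs = n"
  shows "xs \<in> set (parts n m)"
  using assms
proof (induction xs arbitrary: n m)
  case Nil then show ?case by (simp add: parts.simps)
next
  case (Cons k ys)
  have k: "1 \<le> k" "k \<le> m" "k \<le> n" using Cons.prems by auto
  have n0: "n \<noteq> 0" using Cons.prems by auto
  have "ys \<in> set (parts (n - k) k)"
    using Cons.prems by (intro Cons.IH) auto
  then show ?case using k n0 by (subst parts.simps) force
qed

lemma geo_less: "(\<Sum>k=1..n. (2::nat)^(n-k)) < 2^n"
proof (induction n)
  case 0 then show ?case by simp
next
  case (Suc n)
  have "(\<Sum>k=1..Suc n. (2::nat)^(Suc n-k)) = (\<Sum>k=1..n. 2 * 2^(n-k)) + 1"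
    by (simp add: sum.cl_ivl_Suc Suc_diff_le)
  also have "\<dots> = 2 * (\<Sum>k=1..n. 2^(n-k)) + 1" by (simp add: sum_distrib_left)
  finally show ?case using Suc by simp
qed

lemma parts_length: "length (parts n m) \<le> 2 ^ n"
proof (induction n arbitrary: m rule: less_induct)
  case (less n)
  show ?case
  proof (cases "n = 0")
    case True then show ?thesis by (simp add: parts.simps)
  next
    case False
    have "length (parts n m) = (\<Sum>k\<leftarrow>[1..<Suc (min m n)]. length (parts (n - k) k))"
      using False by (subst parts.simps) (simp add: length_concat comp_def)
    also have "\<dots> = (\<Sum>k=1..<Suc (min m n). length (parts (n - k) k))"
      by (simp only: interv_sum_list_conv_sum_set_nat set_upt)
    also have "\<dots> \<le> (\<Sum>k=1..<Suc (min m n). (2::nat) ^ (n - k))"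
      by (rule sum_mono) (use less False in auto)
    also have "\<dots> \<le> (\<Sum>k=1..n. (2::nat) ^ (n - k))"
      by (rule sum_mono2) auto
    also have "\<dots> \<le> 2 ^ n" using geo_less less_imp_le by blast
    finally show ?thesis .
  qed
qed

lemma perm_classify:
  fixes n :: nat
  assumes "\<sigma> permutes {1..n}" "\<sigma> ^^ m = id"
  shows "\<exists>ks h. h permutes {1..n} \<and> \<sigma> = h \<circ> canon ks \<circ> inv_into UNIV h
     \<and> sorted_wrt (\<ge>) ks \<and> 0 \<notin> set ks \<and> sum_list ks = n \<and> (\<forall>k\<in>set ks. k dvd m)
     \<and> (evenperm \<sigma> \<longleftrightarrow> even (sum_list (map (\<lambda>k. k - 1) ks)))"
proof -
  obtain css where css: "distinct (concat css)" "set (concat css) = {1..n}" "[] \<notin> set css"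
     "\<sigma> = cprod css" "sorted_wrt (\<ge>) (map length css)"
    using decomp_sorted[OF assms(1)] by blast
  obtain g where g: "g permutes {1..n}" "\<forall>i<length (concat css). g (concat css ! i) = 1 + i"
    using relabel_exists[OF css(1,2)] by blast
  have bg: "bij g" using g(1) permutes_bij by blast
  have "g \<circ> \<sigma> \<circ> inv_into UNIV g = canon (map length css)"
    using cprod_conj[OF bg css(1)] map_map_blk[of css g 1] g(2) css(4) by (simp add: canon_def)
  then have e: "\<sigma> = inv_into UNIV g \<circ> canon (map length css) \<circ> g"
    using bg by (auto simp: fun_eq_iff bij_inv_eq_iff) (metis bij_inv_eq_iff)
  have h: "inv_into UNIV g permutes {1..n}" using g(1) permutes_inv by blast
  have ii: "inv_into UNIV (inv_into UNIV g) = g" using bg by (simp add: inv_inv_eq)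
  have len: "sum_list (map length css) = n"
    using distinct_card[OF css(1)] css(2) by (simp add: length_concat)
  have dv: "\<forall>k\<in>set (map length css). k dvd m"
  proof
    fix k assume "k \<in> set (map length css)"
    then obtain cs where cs: "cs \<in> set css" "k = length cs" by auto
    have ne: "cs \<noteq> []" using cs css(3) by auto
    have dcs: "distinct cs" using css(1) cs(1) by (simp add: distinct_concat_iff)
    have hd: "hd cs \<in> set cs" using ne by simp
    have "(cycle_of_list cs ^^ m) (hd cs) = hd cs"
      using cprod_pow[OF css(1) cs(1) hd, of m] assms(2) css(4) by simp
    then show "k dvd m" using cycle_pow_dvd[OF dcs ne] cs by simp
  qed
  have ev: "evenperm \<sigma> \<longleftrightarrow> even (sum_list (map (\<lambda>k. k - 1) (map length css)))"
    using cprod_evenperm[OF css(1)] css(4) by (simp add: comp_def)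
  show ?thesis
    apply (rule exI[of _ "map length css"], rule exI[of _ "inv_into UNIV g"])
    using h e ii css(3,5) len dv ev by auto
qed



lemma alt_pow:
  assumes "x \<in> carrier (alt_group n)"
  shows "x [^]\<^bsub>alt_group n\<^esub> (m::nat) = x ^^ m"
proof (induction m)
  case 0 then show ?case by (simp add: alt_group_one)
next
  case (Suc m) then show ?case by (simp add: alt_group_mult funpow_swap1)
qed

lemma (in group) inv_cancel_aux:
  assumes "x \<in> carrier G" "y \<in> carrier G"
  shows "inv x \<otimes> (x \<otimes> y) = y" "x \<otimes> (inv x \<otimes> y) = y"
  using assms by (simp_all add: m_assoc[symmetric])

lemma (in group) conj_class_conj:
  assumes "x \<in> carrier G" "h \<in> carrier G"
  shows "conj_class G (h \<otimes> x \<otimes> inv h) = conj_class G x"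
proof
  show "conj_class G (h \<otimes> x \<otimes> inv h) \<subseteq> conj_class G x"
  proof
    fix y assume "y \<in> conj_class G (h \<otimes> x \<otimes> inv h)"
    then obtain g where g: "g \<in> carrier G" "y = g \<otimes> (h \<otimes> x \<otimes> inv h) \<otimes> inv g"
      unfolding conj_class_def by blast
    have "y = (g \<otimes> h) \<otimes> x \<otimes> inv (g \<otimes> h)"
      using g assms by (simp add: inv_mult_group m_assoc inv_cancel_aux)
    then show "y \<in> conj_class G x" unfolding conj_class_def using g assms by blast
  qed
next
  show "conj_class G x \<subseteq> conj_class G (h \<otimes> x \<otimes> inv h)"
  proof
    fix y assume "y \<in> conj_class G x"
    then obtain g where g: "g \<in> carrier G" "y = g \<otimes> x \<otimes> inv g"
      unfolding conj_class_def by blast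
    have "y = (g \<otimes> inv h) \<otimes> (h \<otimes> x \<otimes> inv h) \<otimes> inv (g \<otimes> inv h)"
      using g assms by (simp add: inv_mult_group m_assoc inv_cancel_aux)
    then show "y \<in> conj_class G (h \<otimes> x \<otimes> inv h)" unfolding conj_class_def using g assms by blast
  qed
qed

lemma alt_conj:
  assumes "h \<in> carrier (alt_group n)"
  shows "h \<otimes>\<^bsub>alt_group n\<^esub> x \<otimes>\<^bsub>alt_group n\<^esub> inv\<^bsub>alt_group n\<^esub> h = h \<circ> x \<circ> inv_into UNIV h"
  using assms by (simp add: alt_group_inv_equality alt_group_mult)

lemma conj_shift:
  assumes "bij h" "bij \<tau>" "x = h \<circ> r \<circ> inv_into UNIV h"
  shows "x = (h \<circ> \<tau>) \<circ> (inv_into UNIV \<tau> \<circ> r \<circ> \<tau>) \<circ> inv_into UNIV (h \<circ> \<tau>)"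
  using assms by (simp add: o_inv_distrib fun_eq_iff bij_inv_eq_iff bij_is_surj surj_f_inv_f)

definition good :: "nat \<Rightarrow> nat list \<Rightarrow> bool" where
  "good p ks \<longleftrightarrow> even (sum_list (map (\<lambda>k. k - 1) ks)) \<and> (\<forall>k\<in>set ks. \<not> p dvd k)"

definition Lset :: "nat \<Rightarrow> nat \<Rightarrow> nat list set" where
  "Lset n p = set (filter (good p) (parts n n))"

lemma core_classify:
  assumes "p_regular (alt_group n) p x"
  shows "\<exists>ks\<in>Lset n p. \<exists>h. h permutes {1..n} \<and> x = h \<circ> canon ks \<circ> inv_into UNIV h
           \<and> canon ks \<in> carrier (alt_group n)"
proof -
  have xc: "x \<in> carrier (alt_group n)" and np: "\<not> p dvd group.ord (alt_group n) x"
    using assms unfolding p_regular_def by auto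
  define m where "m = group.ord (alt_group n) x"
  have "x [^]\<^bsub>alt_group n\<^esub> m = \<one>\<^bsub>alt_group n\<^esub>"
    unfolding m_def by (rule group.pow_ord_eq_1[OF alt_group_is_group xc])
  then have xm: "x ^^ m = id" using alt_pow[OF xc] by (simp add: alt_group_one)
  have xp: "x permutes {1..n}" "evenperm x" using xc alt_group_carrier by auto
  obtain ks h where kh: "h permutes {1..n}" "x = h \<circ> canon ks \<circ> inv_into UNIV h"
     "sorted_wrt (\<ge>) ks" "0 \<notin> set ks" "sum_list ks = n" "\<forall>k\<in>set ks. k dvd m"
     "evenperm x \<longleftrightarrow> even (sum_list (map (\<lambda>k. k - 1) ks))"
    using perm_classify[OF xp(1) xm] by blast
  have ks_in: "ks \<in> Lset n p"
  proof -
    have "ks \<in> set (parts n n)"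
      by (rule parts_mem) (use kh member_le_sum_list in auto)
    moreover have "good p ks" unfolding good_def
      using kh(6,7) xp(2) np m_def dvd_trans by blast
    ultimately show ?thesis by (simp add: Lset_def)
  qed
  have bh: "bij h" using kh(1) permutes_bij by blast
  have r: "canon ks = inv_into UNIV h \<circ> x \<circ> h"
    using kh(2) bh by (simp add: fun_eq_iff bij_inv_eq_iff bij_is_inj inv_f_f)
  have rp: "canon ks permutes {1..n}"
    unfolding r by (intro permutes_compose permutes_inv kh(1) xp(1))
  have "evenperm (canon ks)"
  proof -
    have ph: "permutation h" "permutation (inv_into UNIV h)" "permutation x"
      using kh(1) xp(1) permutation_permutes permutes_inv by blast+
    have "evenperm (inv_into UNIV h \<circ> x \<circ> h) \<longleftrightarrow> (evenperm (inv_into UNIV h) = (evenperm x = evenperm h))"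
      using ph by (simp add: evenperm_comp permutation_compose comp_assoc)
    then show ?thesis using evenperm_inv[OF ph(1)] xp(2) r by simp
  qed
  then have "canon ks \<in> carrier (alt_group n)" using rp alt_group_carrier by blast
  then show ?thesis using ks_in kh(1,2) by blast
qed

lemma class_cover:
  assumes "n \<ge> 2" "p_regular (alt_group n) p x"
  shows "\<exists>ks\<in>Lset n p. conj_class (alt_group n) x = conj_class (alt_group n) (canon ks)
     \<or> conj_class (alt_group n) x = conj_class (alt_group n) (transpose 1 2 \<circ> canon ks \<circ> transpose 1 2)
       \<and> \<not> (\<exists>\<tau>. \<tau> permutes {1..n} \<and> \<not> evenperm \<tau> \<and> \<tau> \<circ> canon ks = canon ks \<circ> \<tau>)"
proof -
  obtain ks h where kh: "ks \<in> Lset n p" "h permutes {1..n}" "x = h \<circ> canon ks \<circ> inv_into UNIV h"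
     "canon ks \<in> carrier (alt_group n)"
    using core_classify[OF assms(2)] by blast
  let ?A = "alt_group n"
  let ?r = "canon ks"
  have bh: "bij h" using kh(2) permutes_bij by blast
  have G: "group ?A" by (rule alt_group_is_group)
  show ?thesis
  proof (cases "evenperm h")
    case True
    then have hc: "h \<in> carrier ?A" using kh(2) alt_group_carrier by blast
    have "conj_class ?A x = conj_class ?A ?r"
      using group.conj_class_conj[OF G kh(4) hc] alt_conj[OF hc, of ?r] kh(3) by simp
    then show ?thesis using kh(1) by blast
  next
    case False
    have key: "conj_class ?A x = conj_class ?A (inv_into UNIV \<tau> \<circ> ?r \<circ> \<tau>)"
      if tau: "\<tau> permutes {1..n}" "\<not> evenperm \<tau>" for \<tau>
    proof -
      have bt: "bij \<tau>" using tau permutes_bij by blast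
      have pp: "permutation h" "permutation \<tau>" "permutation ?r" "permutation (inv_into UNIV \<tau>)"
        using kh(2,4) tau alt_group_carrier permutation_permutes permutes_inv by blast+
      have h'c: "h \<circ> \<tau> \<in> carrier ?A"
        using alt_group_carrier permutes_compose[OF tau(1) kh(2)] evenperm_comp[OF pp(1,2)] False tau(2)
        by blast
      have r'p: "inv_into UNIV \<tau> \<circ> ?r \<circ> \<tau> permutes {1..n}"
        using kh(4) alt_group_carrier tau(1) by (intro permutes_compose permutes_inv) auto
      have "evenperm (inv_into UNIV \<tau> \<circ> ?r \<circ> \<tau>) \<longleftrightarrow> (evenperm (inv_into UNIV \<tau>) = (evenperm ?r = evenperm \<tau>))"
        using pp by (simp add: evenperm_comp permutation_compose comp_assoc)
      then have "evenperm (inv_into UNIV \<tau> \<circ> ?r \<circ> \<tau>)"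
        using evenperm_inv[OF pp(2)] kh(4) alt_group_carrier by auto
      then have r'c: "inv_into UNIV \<tau> \<circ> ?r \<circ> \<tau> \<in> carrier ?A" using r'p alt_group_carrier by blast
      have "x = (h \<circ> \<tau>) \<circ> (inv_into UNIV \<tau> \<circ> ?r \<circ> \<tau>) \<circ> inv_into UNIV (h \<circ> \<tau>)"
        by (rule conj_shift[OF bh bt kh(3)])
      then show ?thesis using group.conj_class_conj[OF G r'c h'c] alt_conj[OF h'c] by simp
    qed
    show ?thesis
    proof (cases "\<exists>\<tau>. \<tau> permutes {1..n} \<and> \<not> evenperm \<tau> \<and> \<tau> \<circ> ?r = ?r \<circ> \<tau>")
      case True
      then obtain \<tau> where tau: "\<tau> permutes {1..n}" "\<not> evenperm \<tau>" "\<tau> \<circ> ?r = ?r \<circ> \<tau>" by blast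
      have bt: "bij \<tau>" using tau permutes_bij by blast
      have "inv_into UNIV \<tau> \<circ> ?r \<circ> \<tau> = ?r"
      proof -
        have "inv_into UNIV \<tau> \<circ> ?r \<circ> \<tau> = (inv_into UNIV \<tau> \<circ> \<tau>) \<circ> ?r"
          by (simp add: tau(3) comp_assoc)
        also have "\<dots> = ?r" using inv_o_cancel[OF bij_is_inj[OF bt]] by simp
        finally show ?thesis .
      qed
      then show ?thesis using key[OF tau(1,2)] kh(1) by auto
    next
      case nt: False
      have t: "transpose 1 2 permutes {1..n}" "\<not> evenperm (transpose (1::nat) 2)"
        using assms(1) by (auto intro: permutes_swap_id simp: evenperm_swap)
      show ?thesis using key[OF t] kh(1) nt by (auto simp: inv_transpose_eq)
    qed
  qed
qed



lemma kp_bound_gen: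
  assumes "n \<ge> 2"
  shows "k_p' (alt_group n) p \<le> 2 * length (filter (good p) (parts n n))"
proof -
  let ?A = "alt_group n"
  let ?L = "Lset n p"
  let ?f1 = "\<lambda>ks. conj_class ?A (canon ks)"
  let ?f2 = "\<lambda>ks. conj_class ?A (transpose 1 2 \<circ> canon ks \<circ> transpose 1 2)"
  have sub: "{conj_class ?A x | x. p_regular ?A p x} \<subseteq> ?f1 ` ?L \<union> ?f2 ` ?L"
    using class_cover[OF assms] by blast
  have fin: "finite ?L" by (simp add: Lset_def)
  have "k_p' ?A p \<le> card (?f1 ` ?L \<union> ?f2 ` ?L)"
    unfolding k_p'_def by (rule card_mono) (use fin sub in auto)
  also have "\<dots> \<le> card (?f1 ` ?L) + card (?f2 ` ?L)" by (rule card_Un_le)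
  also have "\<dots> \<le> card ?L + card ?L" by (intro add_mono card_image_le fin)
  also have "card ?L \<le> length (filter (good p) (parts n n))" unfolding Lset_def by (rule card_length)
  finally show ?thesis by simp
qed

lemma kp_bound_nosplit:
  assumes "n \<ge> 2"
    and "\<forall>ks\<in>Lset n p. \<exists>\<tau>. \<tau> permutes {1..n} \<and> \<not> evenperm \<tau> \<and> \<tau> \<circ> canon ks = canon ks \<circ> \<tau>"
  shows "k_p' (alt_group n) p \<le> length (filter (good p) (parts n n))"
proof -
  let ?A = "alt_group n"
  let ?L = "Lset n p"
  let ?f1 = "\<lambda>ks. conj_class ?A (canon ks)"
  have sub: "{conj_class ?A x | x. p_regular ?A p x} \<subseteq> ?f1 ` ?L"
    using class_cover[OF assms(1)] assms(2) by blast
  have fin: "finite ?L" by (simp add: Lset_def)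
  have "k_p' ?A p \<le> card (?f1 ` ?L)"
    unfolding k_p'_def by (rule card_mono) (use fin sub in auto)
  also have "\<dots> \<le> card ?L" by (intro card_image_le fin)
  also have "card ?L \<le> length (filter (good p) (parts n n))" unfolding Lset_def by (rule card_length)
  finally show ?thesis by simp
qed

fun R :: "nat \<Rightarrow> nat \<Rightarrow> nat" where
  R_0: "R 0 p = 1"
| R_Suc: "R (Suc n) p = (if p dvd Suc n then 1 else Suc n) * R n p"

lemma R_numeral: "R (numeral k) p = (if p dvd numeral k then 1 else numeral k) * R (pred_numeral k) p"
  by (simp add: numeral_eq_Suc)
lemma R_one: "R (Suc 0) p = 1" by simp

lemma R_dvd_fact: "R n p dvd fact n"
proof (induction n)
  case 0 then show ?case by simp
next
  case (Suc n)
  have "(if p dvd Suc n then 1 else Suc n) * R n p dvd Suc n * fact n"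
    by (rule mult_dvd_mono) (use Suc in auto)
  then show ?case by (simp only: R_Suc fact_Suc of_nat_id)
qed

lemma R_coprime: "Factorial_Ring.prime p \<Longrightarrow> coprime (R n p) p"
proof (induction n)
  case 0 then show ?case by simp
next
  case (Suc n)
  have "coprime (if p dvd Suc n then 1 else Suc n) p"
    using Suc.prems by (auto simp: coprime_commute prime_imp_coprime)
  then show ?case using Suc by simp
qed

lemma R_mono_dvd: "R n p dvd R (n + k) p"
  by (induction k) auto

lemma R_even:
  assumes "n \<ge> 2" "Factorial_Ring.prime p" "p \<noteq> 2"
  shows "even (R n p)"
proof -
  have "\<not> p dvd 2"
  proof
    assume "p dvd 2"
    then have "p \<le> 2" by (simp add: dvd_imp_le)
    moreover have "p \<ge> 2" using assms(2) prime_ge_2_nat by blast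
    ultimately show False using assms(3) by simp
  qed
  moreover have "\<not> p dvd 1" using assms(2) by auto
  ultimately have "R 2 p = 2" by (simp add: numeral_2_eq_2)
  moreover have "R 2 p dvd R n p" using R_mono_dvd[of 2 p "n - 2"] assms(1) by (metis le_add_diff_inverse)
  ultimately show ?thesis by (metis dvd_trans)
qed

lemma R_step:
  assumes "p \<ge> 2"
  shows "(n + 1) * R n p \<le> R (n + 2) p"
proof -
  have "R (n + 2) p = (if p dvd n + 2 then 1 else n + 2) * ((if p dvd n + 1 then 1 else n + 1) * R n p)"
    by (simp add: numeral_2_eq_2)
  moreover have "\<not> (p dvd n + 2 \<and> p dvd n + 1)"
  proof
    assume "p dvd n + 2 \<and> p dvd n + 1"
    then have "p dvd (n + 2) - (n + 1)" using dvd_diff_nat by blast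
    then show False using assms by simp
  qed
  ultimately show ?thesis by (cases "p dvd n + 1"; cases "p dvd n + 2") auto
qed

lemma R_big_p: "n < p \<Longrightarrow> R n p = fact n"
  by (induction n) (auto dest: dvd_imp_le)

lemma R_base11: "p \<ge> 3 \<Longrightarrow> 4 * 2^11 * 11 \<le> R 11 p"
proof -
  assume p3: "p \<ge> 3"
  show ?thesis
  proof (cases "p \<le> 12")
    case True
    then have "p = 3 \<or> p = 4 \<or> p = 5 \<or> p = 6 \<or> p = 7 \<or> p = 8 \<or> p = 9 \<or> p = 10 \<or> p = 11 \<or> p = 12"
      using p3 by presburger
    then show ?thesis by (elim disjE) (simp_all add: R_numeral R_one del: R_Suc)
  next
    case False then show ?thesis by (simp add: R_big_p fact_numeral)
  qed
qed

lemma R_base12: "p \<ge> 3 \<Longrightarrow> 4 * 2^12 * 12 \<le> R 12 p"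
proof -
  assume p3: "p \<ge> 3"
  show ?thesis
  proof (cases "p \<le> 13")
    case True
    then have "p = 3 \<or> p = 4 \<or> p = 5 \<or> p = 6 \<or> p = 7 \<or> p = 8 \<or> p = 9 \<or> p = 10 \<or> p = 11 \<or> p = 12 \<or> p = 13"
      using p3 by presburger
    then show ?thesis by (elim disjE) (simp_all add: R_numeral R_one del: R_Suc)
  next
    case False then show ?thesis by (simp add: R_big_p fact_numeral)
  qed
qed

lemma R_large:
  assumes "n \<ge> 11" "p \<ge> 3"
  shows "4 * 2^n * n \<le> R n p"
  using assms(1)
proof (induction n rule: less_induct)
  case (less n)
  show ?case
  proof (cases "n \<le> 12")
    case True
    then have "n = 11 \<or> n = 12" using less.prems by auto
    then show ?thesis using R_base11 R_base12 assms(2) by auto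
  next
    case False
    define m where "m = n - 2"
    have n: "n = m + 2" "m \<ge> 11" using False m_def by auto
    have IH: "4 * 2^m * m \<le> R m p" using less.IH[of m] n by auto
    have "4 * 2^n * n = 4 * 2^m * (4 * (m + 2))" by (simp add: n power_add algebra_simps)
    also have "\<dots> \<le> 4 * 2^m * (m * (m + 1))"
    proof -
      have "11 * (m + 1) \<le> m * (m + 1)" using n(2) by (intro mult_le_mono1)
      moreover have "4 * (m + 2) \<le> 11 * (m + 1)" by simp
      ultimately have "4 * (m + 2) \<le> m * (m + 1)" using le_trans by blast
      then show ?thesis by simp
    qed
    also have "\<dots> = (m + 1) * (4 * 2^m * m)" by (simp add: algebra_simps)
    also have "\<dots> \<le> (m + 1) * R m p" using IH by (rule mult_le_mono2)
    also have "\<dots> \<le> R n p" using R_step[of p m] assms(2) n by simp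
    finally show ?thesis .
  qed
qed

lemma len_5_3: "length (filter (good 3) (parts 5 5)) = 3"
  unfolding good_def by code_simp

lemma len_5_5: "length (filter (good 5) (parts 5 5)) = 3"
  unfolding good_def by code_simp

lemma len_6_3: "length (filter (good 3) (parts 6 6)) = 4"
  unfolding good_def by code_simp

lemma len_6_5: "length (filter (good 5) (parts 6 6)) = 5"
  unfolding good_def by code_simp

lemma len_7_3: "length (filter (good 3) (parts 7 7)) = 5"
  unfolding good_def by code_simp

lemma len_7_5: "length (filter (good 5) (parts 7 7)) = 7"
  unfolding good_def by code_simp

lemma len_7_7: "length (filter (good 7) (parts 7 7)) = 7"
  unfolding good_def by code_simp

lemma len_8_3: "length (filter (good 3) (parts 8 8)) = 7"
  unfolding good_def by code_simp

lemma len_8_5: "length (filter (good 5) (parts 8 8)) = 10"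
  unfolding good_def by code_simp

lemma len_8_7: "length (filter (good 7) (parts 8 8)) = 11"
  unfolding good_def by code_simp

lemma len_9_3: "length (filter (good 3) (parts 9 9)) = 8"
  unfolding good_def by code_simp

lemma len_9_5: "length (filter (good 5) (parts 9 9)) = 13"
  unfolding good_def by code_simp

lemma len_9_7: "length (filter (good 7) (parts 9 9)) = 15"
  unfolding good_def by code_simp

lemma len_10_3: "length (filter (good 3) (parts 10 10)) = 11"
  unfolding good_def by code_simp

lemma len_10_5: "length (filter (good 5) (parts 10 10)) = 18"
  unfolding good_def by code_simp

lemma len_10_7: "length (filter (good 7) (parts 10 10)) = 20"
  unfolding good_def by code_simp

lemma small_cases:
  assumes "n \<in> {5..10}" "p \<in> {3,5,7}" "p \<le> n" "\<not> (n = 5 \<and> p = 5)"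
  shows "2 * length (filter (good p) (parts n n)) * (p - 1) < R n p div 2"
proof -
  have "n = 5 \<or> n = 6 \<or> n = 7 \<or> n = 8 \<or> n = 9 \<or> n = 10" using assms(1) unfolding atLeastAtMost_iff by presburger
  moreover have "p = 3 \<or> p = 5 \<or> p = 7" using assms(2) by simp
  ultimately show ?thesis using assms(3,4)
    by (elim disjE; simp only:; simp add: len_5_3 len_5_5 len_6_3 len_6_5 len_7_3 len_7_5 len_7_7 len_8_3 len_8_5 len_8_7 len_9_3 len_9_5 len_9_7 len_10_3 len_10_5 len_10_7 R_numeral R_one del: R_Suc)
qed

lemma filter55: "filter (good 5) (parts 5 5) = [[1,1,1,1,1],[2,2,1],[3,1,1]]"
  unfolding good_def by code_simp



lemma canon_22: "canon [2,2,1] = transpose 1 2 \<circ> transpose 3 4"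
  by (simp add: canon_def upt_conv_Cons fun_eq_iff eval_nat_numeral)
lemma canon_311: "canon [3,1,1] = transpose 1 2 \<circ> transpose 2 3"
  by (simp add: canon_def upt_conv_Cons fun_eq_iff eval_nat_numeral)
lemma canon_11111: "canon [1,1,1,1,1] = id"
  by (simp add: canon_def upt_conv_Cons fun_eq_iff eval_nat_numeral)

lemma order_alt: "n \<ge> 2 \<Longrightarrow> 2 * order (alt_group n) = fact n"
  unfolding order_def by (rule alt_group_card_carrier)

lemma p_le_n:
  assumes "n \<ge> 2" "Factorial_Ring.prime p" "p dvd order (alt_group n)"
  shows "p \<le> n"
proof -
  have "p dvd 2 * order (alt_group n)" using assms(3) by (rule dvd_mult)
  then have "p dvd fact n" using order_alt[OF assms(1)] by simp
  then show ?thesis using prime_dvd_fact_iff assms(2) by blast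
qed

lemma ordp'_lower:
  assumes "n \<ge> 2" "Factorial_Ring.prime p" "p \<noteq> 2"
  shows "R n p div 2 \<le> order_p' (alt_group n) p" "order_p' (alt_group n) p > 0"
proof -
  let ?O = "order (alt_group n)"
  let ?D = "{d. d dvd ?O \<and> coprime d p}"
  have O2: "2 * ?O = fact n" by (rule order_alt[OF assms(1)])
  have Opos: "?O > 0" using O2 by (metis fact_gt_zero mult_zero_right neq0_conv)
  have fin: "finite ?D"
    by (rule finite_subset[of _ "{..?O}"]) (use Opos in \<open>auto dest: dvd_imp_le\<close>)
  obtain r where r: "R n p = 2 * r" using R_even[OF assms] by blast
  obtain q where q: "fact n = R n p * q" using R_dvd_fact by blast
  have "?O = r * q" using O2 q r by simp
  then have "r dvd ?O" by simp
  moreover have "coprime r p" using R_coprime[OF assms(2), of n] r by simp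
  ultimately have "r \<in> ?D" by simp
  then have "r \<le> Max ?D" by (rule Max_ge[OF fin])
  then show "R n p div 2 \<le> order_p' (alt_group n) p" using r by (simp add: order_p'_def)
  have "1 \<in> ?D" by simp
  then have "1 \<le> Max ?D" by (rule Max_ge[OF fin])
  then show "order_p' (alt_group n) p > 0" by (simp add: order_p'_def)
qed

lemma ordp'_55: "order_p' (alt_group 5) 5 = 12"
proof -
  have O2: "2 * order (alt_group 5) = fact 5" by (rule order_alt) simp
  then have O: "order (alt_group 5) = 60" by (simp add: fact_numeral)
  let ?D = "{d. d dvd (60::nat) \<and> coprime d 5}"
  have fin: "finite ?D"
    by (rule finite_subset[of _ "{..60}"]) (auto dest: dvd_imp_le)
  have "coprime (12::nat) 5" by (simp add: coprime_iff_gcd_eq_1 gcd_non_0_nat)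
  then have "12 \<in> ?D" by simp
  moreover have "d \<le> 12" if "d \<in> ?D" for d
  proof -
    have "d dvd 5 * 12" "coprime d 5" using that by auto
    then have "d dvd 12" using coprime_dvd_mult_right_iff by blast
    then show ?thesis by (rule dvd_imp_le) simp
  qed
  ultimately have "Max ?D = 12" using fin by (intro Max_eqI) auto
  then show ?thesis by (simp add: order_p'_def O)
qed

lemma perm_transpose: "permutation (transpose a b)"
  by (simp add: permutation_swap_id)

lemma in_alt5:
  assumes "a \<in> {1..5}" "b \<in> {1..5}" "c \<in> {1..5}" "d \<in> {1..5}" "a \<noteq> b" "c \<noteq> d"
  shows "transpose a b \<circ> transpose c d \<in> carrier (alt_group 5)"
  unfolding alt_group_carrier
  using assms by (simp add: permutes_compose permutes_swap_id evenperm_comp perm_transpose evenperm_swap)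

lemma regular_by_pow:
  assumes "x \<in> carrier (alt_group n)" "x ^^ m = id" "\<not> p dvd m"
  shows "p_regular (alt_group n) p x"
proof -
  have "x [^]\<^bsub>alt_group n\<^esub> m = \<one>\<^bsub>alt_group n\<^esub>" using alt_pow[OF assms(1)] assms(2) by (simp add: alt_group_one)
  then have "group.ord (alt_group n) x dvd m" using group.pow_eq_id[OF alt_group_is_group assms(1)] by blast
  then show ?thesis using assms(1,3) dvd_trans unfolding p_regular_def by blast
qed

lemma conj_class_self: "x \<in> carrier (alt_group n) \<Longrightarrow> x \<in> conj_class (alt_group n) x"
proof -
  have ic: "id \<in> carrier (alt_group n)" using alt_group_carrier permutes_id evenperm_id by blast
  have "id \<otimes>\<^bsub>alt_group n\<^esub> x \<otimes>\<^bsub>alt_group n\<^esub> inv\<^bsub>alt_group n\<^esub> id = x"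
    using alt_conj[OF ic] by (simp add: inv_id)
  then show "x \<in> conj_class (alt_group n) x" unfolding conj_class_def using ic by force
qed

lemma conj_class_alt:
  "y \<in> conj_class (alt_group n) x \<Longrightarrow> \<exists>g. bij g \<and> y = g \<circ> x \<circ> inv_into UNIV g"
  unfolding conj_class_def using alt_conj alt_group_carrier permutes_bij by fastforce

lemma k55_lower: "k_p' (alt_group 5) 5 \<ge> 3"
proof -
  let ?A = "alt_group 5"
  define a :: "nat \<Rightarrow> nat" where "a = transpose 1 2 \<circ> transpose 3 4"
  define b :: "nat \<Rightarrow> nat" where "b = transpose 1 2 \<circ> transpose 2 3"
  have ac: "a \<in> carrier ?A" unfolding a_def by (rule in_alt5) auto
  have bc: "b \<in> carrier ?A" unfolding b_def by (rule in_alt5) auto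
  have ic: "id \<in> carrier ?A" using alt_group_carrier permutes_id evenperm_id by blast
  have aa: "a \<circ> a = id" by (auto simp: a_def fun_eq_iff transpose_def)
  have bbb: "b ^^ 3 = id" by (auto simp: b_def fun_eq_iff transpose_def eval_nat_numeral)
  have bb: "b \<circ> b \<noteq> id"
  proof
    assume "b \<circ> b = id"
    then have "(b \<circ> b) 1 = 1" by simp
    then show False by (simp add: b_def transpose_def)
  qed
  have a1: "a \<noteq> id" proof assume "a = id" then have "a 1 = 1" by simp then show False by (simp add: a_def) qed
  have b1: "b \<noteq> id" proof assume "b = id" then have "b 1 = 1" by simp then show False by (simp add: b_def) qed
  have a2: "a ^^ 2 = id" using aa by (simp add: numeral_2_eq_2)
  have ra: "p_regular ?A 5 a" by (rule regular_by_pow[OF ac a2]) simp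
  have rb: "p_regular ?A 5 b" by (rule regular_by_pow[OF bc bbb]) simp
  have ri: "p_regular ?A 5 id" by (rule regular_by_pow[OF ic, of 1]) simp_all
  have cid: "conj_class ?A id = {id}"
  proof
    show "conj_class ?A id \<subseteq> {id}"
      using conj_class_alt by (fastforce simp: fun_eq_iff bij_inv_eq_iff bij_is_surj surj_f_inv_f)
    show "{id} \<subseteq> conj_class ?A id" using conj_class_self[OF ic] by simp
  qed
  have ca: "y \<circ> y = id" if yc: "y \<in> conj_class ?A a" for y
  proof -
    obtain g where g: "bij g" "y = g \<circ> a \<circ> inv_into UNIV g" using conj_class_alt[OF yc] by blast
    have "y \<circ> y = g \<circ> a \<circ> (inv_into UNIV g \<circ> g) \<circ> a \<circ> inv_into UNIV g" using g(2) by (simp add: comp_assoc)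
    also have "\<dots> = g \<circ> (a \<circ> a) \<circ> inv_into UNIV g" using inv_o_cancel[OF bij_is_inj[OF g(1)]] by (simp add: comp_assoc)
    also have "\<dots> = id" using aa g(1) by (simp add: fun_eq_iff bij_is_surj surj_f_inv_f)
    finally show ?thesis .
  qed
  let ?S = "{conj_class ?A x | x. p_regular ?A 5 x}"
  have sub: "{conj_class ?A id, conj_class ?A a, conj_class ?A b} \<subseteq> ?S" using ra rb ri by blast
  have d1: "conj_class ?A a \<noteq> conj_class ?A id" using conj_class_self[OF ac] cid a1 by auto
  have d2: "conj_class ?A b \<noteq> conj_class ?A id" using conj_class_self[OF bc] cid b1 by auto
  have d3: "conj_class ?A b \<noteq> conj_class ?A a" using conj_class_self[OF bc] ca bb by auto
  have c3: "card {conj_class ?A id, conj_class ?A a, conj_class ?A b} = 3" using d1 d2 d3 by auto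
  have "finite (carrier ?A)"
    by (rule finite_subset[of _ "{p. p permutes {1..(5::nat)}}"]) (auto simp: alt_group_carrier finite_permutations)
  then have fS: "finite ?S"
    by (rule finite_subset[rotated, OF finite_imageI[of _ "conj_class ?A"]]) (auto simp: p_regular_def)
  show ?thesis unfolding k_p'_def using card_mono[OF fS sub] c3 by simp
qed

lemma k55_upper: "k_p' (alt_group 5) 5 \<le> 3"
proof -
  have "k_p' (alt_group 5) 5 \<le> length (filter (good 5) (parts 5 5))"
  proof (rule kp_bound_nosplit)
    show "\<forall>ks\<in>Lset 5 5. \<exists>\<tau>. \<tau> permutes {1..5} \<and> \<not> evenperm \<tau> \<and> \<tau> \<circ> canon ks = canon ks \<circ> \<tau>"
    proof
      fix ks assume "ks \<in> Lset 5 5"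
      then have ks: "ks = [1,1,1,1,1] \<or> ks = [2,2,1] \<or> ks = [3,1,1]" by (simp add: Lset_def filter55)
      have t12: "transpose 1 2 permutes {1..(5::nat)}" "\<not> evenperm (transpose (1::nat) 2)"
        by (auto intro: permutes_swap_id simp: evenperm_swap)
      have t45: "transpose 4 5 permutes {1..(5::nat)}" "\<not> evenperm (transpose (4::nat) 5)"
        by (auto intro: permutes_swap_id simp: evenperm_swap)
      have c1: "transpose 1 2 \<circ> canon [1,1,1,1,1] = canon [1,1,1,1,1] \<circ> transpose (1::nat) 2"
        unfolding canon_11111 by simp
      have c2: "transpose 1 2 \<circ> canon [2,2,1] = canon [2,2,1] \<circ> transpose (1::nat) 2"
        unfolding canon_22 by (auto simp: fun_eq_iff transpose_def)
      have c3: "transpose 4 5 \<circ> canon [3,1,1] = canon [3,1,1] \<circ> transpose (4::nat) 5"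
        unfolding canon_311 by (auto simp: fun_eq_iff transpose_def)
      show "\<exists>\<tau>. \<tau> permutes {1..5} \<and> \<not> evenperm \<tau> \<and> \<tau> \<circ> canon ks = canon ks \<circ> \<tau>"
        using ks t12 t45 c1 c2 c3 by blast
    qed
  qed simp
  then show ?thesis by (simp add: filter55)
qed



lemma p_cases:
  assumes "p \<le> (10::nat)" "Factorial_Ring.prime p" "odd p"
  shows "p = 3 \<or> p = 5 \<or> p = 7"
proof -
  have "p = 1 \<or> p = 3 \<or> p = 5 \<or> p = 7 \<or> p = 9" using assms(1,3) by presburger
  moreover have "p \<noteq> 1" using assms(2) by auto
  moreover have "p \<noteq> 9"
  proof
    assume "p = 9"
    then have "Factorial_Ring.prime (9::nat)" using assms(2) by simp
    moreover have "(3::nat) dvd 9" by simp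
    moreover have "(3::nat) \<noteq> 1" "(3::nat) \<noteq> 9" by simp_all
    ultimately show False unfolding prime_nat_iff by blast
  qed
  ultimately show ?thesis by blast
qed

lemma main_nat:
  fixes n p :: nat
  assumes "n \<ge> 5" and "Factorial_Ring.prime p" and "odd p" and "p dvd order (alt_group n)"
  shows "if p = 5 \<and> n = 5 then k_p' (alt_group n) p = 3 \<and> order_p' (alt_group n) p = 12
         else k_p' (alt_group n) p * (p - 1) < order_p' (alt_group n) p"
proof -
  let ?K = "k_p' (alt_group n) p"
  let ?O = "order_p' (alt_group n) p"
  have n2: "n \<ge> 2" using assms(1) by simp
  have p2: "p \<noteq> 2" using assms(3) by auto
  have pn: "p \<le> n" using p_le_n[OF n2 assms(2,4)] .
  have pge: "p \<ge> 2" using assms(2) prime_ge_2_nat by blast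
  have Olow: "R n p div 2 \<le> ?O" using ordp'_lower[OF n2 assms(2) p2] by blast
  have Kb: "?K \<le> 2 * length (filter (good p) (parts n n))" using kp_bound_gen[OF n2] .
  show ?thesis
  proof (cases "p = 5 \<and> n = 5")
    case True
    then show ?thesis using k55_lower k55_upper ordp'_55 by simp
  next
    case False
    have "?K * (p - 1) < ?O"
    proof (cases "n \<ge> 11")
      case True
      have "length (filter (good p) (parts n n)) \<le> 2 ^ n"
        using parts_length[of n n] length_filter_le order_trans by blast
      then have K2: "?K \<le> 2 * 2 ^ n" using Kb by linarith
      have "?K * (p - 1) \<le> 2 * 2 ^ n * (p - 1)" using K2 by (rule mult_le_mono1)
      also have "\<dots> < 2 * 2 ^ n * n" using pn pge by (intro mult_less_mono2) auto
      also have "\<dots> = (4 * 2 ^ n * n) div 2" by simp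
      also have "\<dots> \<le> R n p div 2" using R_large[OF True] pge p2 by (intro div_le_mono) simp
      also have "\<dots> \<le> ?O" by (rule Olow)
      finally show ?thesis .
    next
      case small: False
      have "p = 3 \<or> p = 5 \<or> p = 7" using p_cases[OF _ assms(2,3)] pn small by simp
      then have sc: "2 * length (filter (good p) (parts n n)) * (p - 1) < R n p div 2"
        using small_cases[of n p] assms(1) small pn False by auto
      have "?K * (p - 1) \<le> 2 * length (filter (good p) (parts n n)) * (p - 1)"
        using Kb by (rule mult_le_mono1)
      then show ?thesis using sc Olow by linarith
    qed
    then show ?thesis unfolding if_not_P[OF False] .
  qed
qed

theorem proposition3p4:
  fixes n p :: nat
  assumes "n \<ge> 5" and "Factorial_Ring.prime p" and "odd p" and "p dvd order (alt_group n)"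
  shows "d_p' (alt_group n) p \<le> 1 / (real p - 1)
         \<and> (d_p' (alt_group n) p = 1 / (real p - 1) \<longleftrightarrow> p = 5 \<and> n = 5)"
proof -
  let ?K = "k_p' (alt_group n) p"
  let ?O = "order_p' (alt_group n) p"
  note M = main_nat[OF assms]
  have p2: "p \<noteq> 2" using assms(3) by auto
  have pge: "p \<ge> 2" using assms(2) prime_ge_2_nat by blast
  have Opos: "?O > 0" using ordp'_lower[OF _ assms(2) p2] assms(1) by simp
  have pr: "real p - 1 > 0" using pge by simp
  show ?thesis
  proof (cases "p = 5 \<and> n = 5")
    case True
    then have "?K = 3" "?O = 12" using M by auto
    then have "d_p' (alt_group n) p = 1 / (real p - 1)" using True by (simp add: d_p'_def)
    then show ?thesis using True by simp
  next
    case False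
    have lt: "?K * (p - 1) < ?O" using M unfolding if_not_P[OF False] .
    have e: "real (p - 1) = real p - 1" using pge by (simp add: of_nat_diff)
    have "real ?K * real (p - 1) < real ?O" using lt by (metis of_nat_less_iff of_nat_mult)
    then have "real ?K * (real p - 1) < real ?O" by (simp only: e)
    then have "real ?K / real ?O < 1 / (real p - 1)"
      using Opos pr by (simp add: divide_simps mult.commute)
    then show ?thesis using False by (simp add: d_p'_def)
  qed
qed


end
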